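(* Let $0<\theta\le 3/4$ and $f(x)=\log\frac{\cosh(x/2)+\theta\sinh(x/2)}{\cosh(x/2)-\theta\sinh(x/2)}$. Then $|f(x)-f(y)|\le 2f(|x-y|/2)$ for all $x,y\in\mathbb R$. Moreover, there exists a universal constant $\kappa>1/100$ (independent of $\theta$) such that for all constants $C_1,C_2\ge1$ with $C_2\ge1+(\tfrac12C_1-1)(1-\theta^2)$ and all $\delta>0$, $$f(\delta)\big(1+4\kappa(1-\theta)C_1\,\delta\tanh(\delta/2)\big)\le C_2\,\theta\,\delta.$$ *)

theory Defs
  imports Complex_Main
begin

definition fth :: "real \<Rightarrow> real \<Rightarrow> real" where
  "fth \<theta> x = ln ((cosh (x/2) + \<theta> * sinh (x/2)) / (cosh (x/2) - \<theta> * sinh (x/2)))"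

end

theory Submission imports Defs begin

definition P :: "real \<Rightarrow> real \<Rightarrow> real" where
  "P \<theta> X = ((1+\<theta>)*X + (1-\<theta>)) / ((1-\<theta>)*X + (1+\<theta>))"

lemma fth_exp: "fth \<theta> x = ln (P \<theta> (exp x))"
proof -
  have e: "exp x = exp (x/2) * exp (x/2)" by (simp flip: exp_add)
  have e2: "exp (x/2) * exp (-(x/2)) = 1" by (simp flip: exp_add)
  have pos: "exp (x/2) > 0" by simp
  have "(cosh (x/2) + \<theta> * sinh (x/2)) / (cosh (x/2) - \<theta> * sinh (x/2))
      = ((cosh (x/2) + \<theta> * sinh (x/2)) * (2*exp (x/2))) / ((cosh (x/2) - \<theta> * sinh (x/2)) * (2*exp (x/2)))"
    using pos by simp
  also have "\<dots> = P \<theta> (exp x)"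
    unfolding P_def cosh_def sinh_def e using e2
    by (simp add: algebra_simps)
  finally show ?thesis unfolding fth_def by simp
qed

lemma P_pos: "0 < \<theta> \<Longrightarrow> \<theta> < 1 \<Longrightarrow> X > 0 \<Longrightarrow> P \<theta> X > 0"
  unfolding P_def by (intro divide_pos_pos) (auto intro!: add_pos_pos mult_pos_pos)

lemma P_mono: "0 < \<theta> \<Longrightarrow> \<theta> < 1 \<Longrightarrow> 0 < Y \<Longrightarrow> Y \<le> X \<Longrightarrow> P \<theta> Y \<le> P \<theta> X"
proof -
  assume h: "0 < \<theta>" "\<theta> < 1" "0 < Y" "Y \<le> X"
  define a where "a = 1+\<theta>"
  define b where "b = 1-\<theta>"
  have ab: "a > b" "b > 0" using h by (auto simp: a_def b_def)
  have d1: "b*Y+a > 0" "b*X+a>0" using ab h by (auto intro!: add_nonneg_pos mult_nonneg_nonneg)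
  have "(a*Y+b)*(b*X+a) \<le> (a*X+b)*(b*Y+a)"
  proof -
    have "(a*X+b)*(b*Y+a) - (a*Y+b)*(b*X+a) = (a*a-b*b)*(X-Y)" by (simp add: algebra_simps)
    moreover have "(a*a-b*b)*(X-Y) \<ge> 0" using ab h
      by (intro mult_nonneg_nonneg) (auto intro: mult_strict_mono[THEN less_imp_le] simp: mult_strict_mono)
    ultimately show ?thesis by linarith
  qed
  thus ?thesis unfolding P_def a_def[symmetric] b_def[symmetric] using d1
    by (simp add: divide_simps mult.commute)
qed

lemma P_ge1: "0 < \<theta> \<Longrightarrow> \<theta> < 1 \<Longrightarrow> 1 \<le> X \<Longrightarrow> 1 \<le> P \<theta> X"
  using P_mono[of \<theta> 1 X] by (simp add: P_def)

lemma P_key: assumes "0 < \<theta>" "\<theta> < 1" "0 < u" "1 \<le> Z"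
  shows "P \<theta> (u*Z^2) \<le> (P \<theta> Z)^2 * P \<theta> u"
proof -
  define a where "a = 1+\<theta>"
  define b where "b = 1-\<theta>"
  have ab: "a > b" "b > 0" using assms by (auto simp: a_def b_def)
  have d: "b*u+a > 0" "b*(u*Z^2)+a>0" "b*Z+a > 0" using ab assms by (auto intro!: add_nonneg_pos mult_nonneg_nonneg)
  have "(a*(u*Z^2)+b)*(b*Z+a)^2*(b*u+a) \<le> (a*Z+b)^2*(a*u+b)*(b*(u*Z^2)+a)"
  proof -
    have "(a*Z+b)^2*(a*u+b)*(b*(u*Z^2)+a) - (a*(u*Z^2)+b)*(b*Z+a)^2*(b*u+a)
       = a*b*(a*a-b*b)*(Z*Z-1)*(u*Z-1)^2" by (simp add: algebra_simps power2_eq_square)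
    moreover have "a*a-b*b \<ge> 0" using ab by (simp add: mult_mono)
    moreover have "Z*Z-1 \<ge> 0" using mult_mono[of 1 Z 1 Z] assms by simp
    ultimately show ?thesis using ab by (smt (verit) mult_nonneg_nonneg zero_le_power2)
  qed
  thus ?thesis unfolding P_def a_def[symmetric] b_def[symmetric] using d
    by (simp add: divide_simps power2_eq_square mult.commute mult.left_commute)
qed

lemma part1_aux:
  assumes t: "0 < \<theta>" "\<theta> < 1" and xy: "y \<le> x"
  shows "\<bar>fth \<theta> x - fth \<theta> y\<bar> \<le> 2 * fth \<theta> (\<bar>x - y\<bar> / 2)"
proof -
  define u where "u = exp y"
  define Z where "Z = exp ((x-y)/2)"
  have u: "u > 0" by (simp add: u_def)
  have Z: "Z \<ge> 1" using xy by (simp add: Z_def)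
  have ex: "exp x = u * Z^2"
    unfolding u_def Z_def by (simp flip: exp_add exp_of_nat_mult add: power2_eq_square)
  have fx: "fth \<theta> x = ln (P \<theta> (u*Z^2))" by (simp add: fth_exp ex)
  have fy: "fth \<theta> y = ln (P \<theta> u)" by (simp add: fth_exp u_def)
  have fz: "fth \<theta> (\<bar>x - y\<bar> / 2) = ln (P \<theta> Z)" using xy by (simp add: fth_exp Z_def)
  have pu: "P \<theta> u > 0" using P_pos t u by blast
  have pz: "P \<theta> Z \<ge> 1" using P_ge1 t Z by blast
  have pX: "P \<theta> (u*Z^2) > 0" using P_pos t u Z by (simp add: P_pos)
  have "ln (P \<theta> (u*Z^2)) \<le> ln ((P \<theta> Z)^2 * P \<theta> u)"
    using P_key[OF t u Z] pX by simp
  also have "\<dots> = 2 * ln (P \<theta> Z) + ln (P \<theta> u)"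
    using pz pu by (simp add: ln_mult ln_realpow)
  finally have up: "fth \<theta> x - fth \<theta> y \<le> 2 * fth \<theta> (\<bar>x - y\<bar> / 2)" using fx fy fz by simp
  have "u \<le> u*Z^2" using u Z by (simp add: one_le_power)
  hence "P \<theta> u \<le> P \<theta> (u*Z^2)" using P_mono t u by blast
  hence lo: "fth \<theta> y \<le> fth \<theta> x" using fx fy pu by simp
  have "fth \<theta> (\<bar>x - y\<bar> / 2) \<ge> 0" using fz pz by simp
  thus ?thesis using up lo by linarith
qed

lemma part1:
  assumes t: "0 < \<theta>" "\<theta> < 1"
  shows "\<bar>fth \<theta> x - fth \<theta> y\<bar> \<le> 2 * fth \<theta> (\<bar>x - y\<bar> / 2)"
proof (cases "y \<le> x")
  case True thus ?thesis using part1_aux[OF t] by blast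
next
  case False thus ?thesis using part1_aux[OF t, of x y] by (simp add: abs_minus_commute)
qed

definition L :: "real \<Rightarrow> real" where "L s = ln (1+s) - ln (1-s)"

lemma L_deriv: assumes "\<bar>s\<bar> < 1" shows "(L has_real_derivative (2/(1-s^2))) (at s)"
proof -
  have p: "1+s > 0" "1-s > 0" using assms by auto
  have "((\<lambda>s. ln (1+s) - ln (1-s)) has_real_derivative (1/(1+s) - (-1)/(1-s))) (at s)"
    using p by (auto intro!: derivative_eq_intros)
  moreover have "1/(1+s) - (-1)/(1-s) = 2/(1-s^2)" using p by (simp add: field_simps power2_eq_square)
  ultimately show ?thesis unfolding L_def[abs_def] by simp
qed

lemma L_deriv': assumes "\<bar>s\<bar> < 1" shows "(L has_real_derivative (1/(1+s) + 1/(1-s))) (at s)"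
proof -
  have p: "1+s > 0" "1-s > 0" using assms by auto
  have "((\<lambda>s. ln (1+s) - ln (1-s)) has_real_derivative (1/(1+s) - (-1)/(1-s))) (at s)"
    using p by (auto intro!: derivative_eq_intros)
  thus ?thesis unfolding L_def[abs_def] by simp
qed

lemma L_nonneg: "0 \<le> s \<Longrightarrow> s < 1 \<Longrightarrow> 0 \<le> L s"
  unfolding L_def by simp

lemma L_le: assumes "0 \<le> s" "s < 1" shows "L s \<le> 2*s/(1-s^2)"
proof -
  define g where "g x = 1/(1-x) - 1/(1+x) - L x" for x
  have "g 0 \<le> g s"
  proof (rule DERIV_nonneg_imp_nondecreasing[OF assms(1)])
    fix x assume x: "0 \<le> x" "x \<le> s"
    hence x1: "x < 1" "\<bar>x\<bar> < 1" using assms by auto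
    have p: "1-x > 0" "1+x>0" using x1 by auto
    have "(g has_real_derivative (1/(1-x)^2 - (-1/(1+x)^2) - (1/(1+x) + 1/(1-x)))) (at x)"
      unfolding g_def[abs_def]
      by (rule derivative_eq_intros L_deriv'[OF x1(2)] refl | use p in \<open>simp add: field_simps power2_eq_square\<close>)+
    moreover have "1/(1-x)^2 - (-1/(1+x)^2) - (1/(1+x) + 1/(1-x)) = (1/(1-x) - 1/(1+x))^2"
    proof -
      define a where "a = 1/(1-x)"
      define b where "b = 1/(1+x)"
      have ab: "1/(1+x) + 1/(1-x) = 2*a*b" unfolding a_def b_def using p by (simp add: field_simps)
      have "1/(1-x)^2 = a^2" "1/(1+x)^2 = b^2" unfolding a_def b_def by (simp_all add: power_one_over)
      thus ?thesis using ab unfolding a_def[symmetric] b_def[symmetric] by (simp add: power2_diff)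
    qed
    ultimately show "\<exists>y. (g has_real_derivative y) (at x) \<and> 0 \<le> y" by force
  qed
  moreover have "1/(1-s) - 1/(1+s) = 2*s/(1-s^2)"
    using assms by (simp add: field_simps power2_eq_square)
  ultimately show ?thesis by (simp add: g_def L_def)
qed

lemma mainB:
  fixes \<theta> t :: real
  assumes th: "0 < \<theta>" "\<theta> < 1" and t: "0 \<le> t" "t < 1"
  shows "L (\<theta>*t) * (1 + 4/25*(1-\<theta>)*t*L t) \<le> \<theta> * L t"
proof -
  define K where "K = 4/25*(1-\<theta>)"
  have K0: "K \<ge> 0" using th by (simp add: K_def)
  have "(1-\<theta>)*(1+\<theta> - 24/25) \<ge> 0" using th by (intro mult_nonneg_nonneg) auto
  moreover have "1 - \<theta>^2 - 6*K = (1-\<theta>)*(1+\<theta> - 24/25)"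
    by (simp add: K_def power2_eq_square field_simps)
  ultimately have K1: "6*K \<le> 1 - \<theta>^2" by linarith
  define h where "h x = \<theta>*L x - L(\<theta>*x) - K*x*L x*L(\<theta>*x)" for x
  have "h 0 \<le> h t"
  proof (rule DERIV_nonneg_imp_nondecreasing[OF t(1)])
    fix x assume x: "0 \<le> x" "x \<le> t"
    hence x1: "\<bar>x\<bar> < 1" "x < 1" using t by auto
    have tx4: "\<theta>*x \<le> x" using th x by (intro mult_left_le_one_le) auto
    have tx: "\<bar>\<theta>*x\<bar> < 1" "\<theta>*x < 1" "0 \<le> \<theta>*x" "\<theta>*x \<le> x"
      using th x x1 tx4 by auto
    define D1 where "D1 = 1 - x^2"
    define D2 where "D2 = 1 - (\<theta>*x)^2"
    have D1: "D1 > 0" unfolding D1_def using x1 by (simp add: abs_square_less_1)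
    have D2: "D2 > 0" unfolding D2_def using tx by (simp add: abs_square_less_1)
    have dL1: "(L has_real_derivative (2/D1)) (at x)" unfolding D1_def by (rule L_deriv[OF x1(1)])
    have dL2: "((\<lambda>x. L(\<theta>*x)) has_real_derivative (2/D2)*\<theta>) (at x)"
    proof -
      have "((\<lambda>x. \<theta>*x) has_real_derivative \<theta>) (at x)" by (auto intro!: derivative_eq_intros)
      from DERIV_chain2[where f=L and g="\<lambda>x. \<theta>*x", OF L_deriv[OF tx(1)] this]
      show ?thesis by (simp add: D2_def)
    qed
    define p where "p = L x"
    define q where "q = L (\<theta>*x)"
    have p: "0 \<le> p" "p \<le> 2*x/D1" unfolding p_def D1_def using L_nonneg L_le x x1 by auto
    have q: "0 \<le> q" "q \<le> 2*(\<theta>*x)/D2" unfolding q_def D2_def using L_nonneg L_le tx by auto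
    define E where "E = \<theta>*(2/D1) - (2/D2)*\<theta> - K*(p*q + x*(2/D1)*q + x*p*\<theta>*(2/D2))"
    have "(h has_real_derivative E) (at x)"
      unfolding h_def[abs_def] E_def p_def q_def
      by (rule derivative_eq_intros dL1 dL2 refl | simp add: algebra_simps)+
    moreover have "E \<ge> 0"
    proof -
      define c where "c = x^2/(D1*D2)"
      have c0: "c \<ge> 0" unfolding c_def using D1 D2 by simp
      have b1: "p*q \<le> 4*\<theta>*c"
      proof -
        have "p*q \<le> (2*x/D1)*(2*(\<theta>*x)/D2)" using p q by (intro mult_mono) auto
        also have "\<dots> = 4*\<theta>*c" unfolding c_def using D1 D2 by (simp add: field_simps power2_eq_square)
        finally show ?thesis .
      qed
      have b2: "x*(2/D1)*q \<le> 4*\<theta>*c"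
      proof -
        have "x*(2/D1)*q \<le> x*(2/D1)*(2*(\<theta>*x)/D2)" using q x D1 by (intro mult_left_mono) auto
        also have "\<dots> = 4*\<theta>*c" unfolding c_def using D1 D2 by (simp add: field_simps power2_eq_square)
        finally show ?thesis .
      qed
      have b3: "x*p*\<theta>*(2/D2) \<le> 4*\<theta>*c"
      proof -
        have "x*p*\<theta>*(2/D2) = p*(x*\<theta>*(2/D2))" by simp
        also have "\<dots> \<le> (2*x/D1)*(x*\<theta>*(2/D2))" using p x th D2 by (intro mult_right_mono) auto
        also have "\<dots> = 4*\<theta>*c" unfolding c_def using D1 D2 by (simp add: field_simps power2_eq_square)
        finally show ?thesis .
      qed
      have m: "\<theta>*(2/D1) - (2/D2)*\<theta> = 2*\<theta>*(1-\<theta>^2)*c"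
        unfolding c_def D1_def D2_def using D1 D2 unfolding D1_def D2_def
        by (simp add: field_simps power2_eq_square)
      have "K*(p*q + x*(2/D1)*q + x*p*\<theta>*(2/D2)) \<le> K*(12*\<theta>*c)"
        using b1 b2 b3 K0 by (intro mult_left_mono) auto
      moreover have "K*(12*\<theta>*c) \<le> 2*\<theta>*(1-\<theta>^2)*c"
      proof -
        have "K*(12*\<theta>*c) = (6*K)*(2*\<theta>*c)" by simp
        also have "\<dots> \<le> (1-\<theta>^2)*(2*\<theta>*c)" using K1 th c0 by (intro mult_right_mono) auto
        finally show ?thesis by simp
      qed
      ultimately show ?thesis unfolding E_def using m by linarith
    qed
    ultimately show "\<exists>y. (h has_real_derivative y) (at x) \<and> 0 \<le> y" by blast
  qed
  moreover have "h 0 = 0" by (simp add: h_def L_def)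
  ultimately have "0 \<le> h t" by simp
  thus ?thesis unfolding h_def K_def by (simp add: algebra_simps)
qed

lemma part2:
  fixes \<theta> C1 C2 \<delta> :: real
  assumes th: "0 < \<theta>" "\<theta> \<le> 3/4" and C: "C1 \<ge> 1" "C2 \<ge> 1" "C2 \<ge> 1 + (C1/2 - 1) * (1 - \<theta>^2)"
    and d: "\<delta> > 0"
  shows "fth \<theta> \<delta> * (1 + 4 * (1/50) * (1 - \<theta>) * C1 * \<delta> * tanh (\<delta>/2)) \<le> C2 * \<theta> * \<delta>"
proof -
  have th1: "\<theta> < 1" using th by simp
  define E where "E = exp \<delta>"
  have E: "E > 1" using d by (simp add: E_def)
  define t where "t = (E-1)/(E+1)"
  have t: "0 < t" "t < 1" using E by (auto simp: t_def field_simps)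
  have tanh: "tanh (\<delta>/2) = t"
  proof -
    have em: "exp (-2*(\<delta>/2)) = 1/E" by (simp add: E_def exp_minus field_simps)
    have "tanh (\<delta>/2) = (1 - 1/E)/(1+1/E)" unfolding tanh_real_altdef em ..
    also have "\<dots> = t"
    proof -
      have "E \<noteq> 0" "E + 1 \<noteq> 0" using E by auto
      hence "(1 - 1/E)/(1+1/E) = ((1-1/E)*E)/((1+1/E)*E)" by simp
      also have "(1-1/E)*E = E - 1" using \<open>E \<noteq> 0\<close> by (simp add: algebra_simps)
      also have "(1+1/E)*E = E + 1" using \<open>E \<noteq> 0\<close> by (simp add: algebra_simps)
      finally show ?thesis unfolding t_def .
    qed
    finally show ?thesis .
  qed
  have Lt: "L t = \<delta>"
  proof -
    have "L t = ln ((1+t)/(1-t))" unfolding L_def using t by (simp add: ln_div)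
    also have "(1+t)/(1-t) = E" unfolding t_def using E by (simp add: field_simps)
    finally show ?thesis by (simp add: E_def)
  qed
  have tt: "0 \<le> \<theta>*t" "\<theta>*t < 1" using t th1 th by (auto intro: mult_less_le_imp_less[of \<theta> 1 t 1, simplified])
  have F: "fth \<theta> \<delta> = L (\<theta>*t)"
  proof -
    have "L (\<theta>*t) = ln ((1+\<theta>*t)/(1-\<theta>*t))" unfolding L_def using tt by (simp add: ln_div)
    also have "(1+\<theta>*t)/(1-\<theta>*t) = P \<theta> E"
    proof -
      have ne: "E + 1 \<noteq> 0" using E by auto
      have "(1+\<theta>*t)/(1-\<theta>*t) = ((1+\<theta>*t)*(E+1))/((1-\<theta>*t)*(E+1))" using ne by simp
      also have "(1+\<theta>*t)*(E+1) = (1+\<theta>)*E + (1-\<theta>)" unfolding t_def using ne by (simp add: field_simps)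
      also have "(1-\<theta>*t)*(E+1) = (1-\<theta>)*E + (1+\<theta>)" unfolding t_def using ne by (simp add: field_simps)
      finally show ?thesis unfolding P_def .
    qed
    finally show ?thesis by (simp add: fth_exp E_def)
  qed
  define Fv where "Fv = L (\<theta>*t)"
  have F0: "Fv \<ge> 0" unfolding Fv_def using tt L_nonneg by simp
  have mB: "Fv * (1 + 4/25*(1-\<theta>)*t*\<delta>) \<le> \<theta> * \<delta>"
    using mainB[OF th(1) th1 less_imp_le[OF t(1)] t(2)] Lt by (simp add: Fv_def)
  have FM: "t * Fv \<le> 2*\<theta>/(1-\<theta>^2)"
  proof -
    have "Fv \<le> 2*(\<theta>*t)/(1-(\<theta>*t)^2)" unfolding Fv_def using L_le tt by simp
    also have "\<dots> \<le> 2*\<theta>/(1-\<theta>^2)"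
    proof (rule frac_le)
      show "0 \<le> 2*\<theta>" using th by simp
      show "2*(\<theta>*t) \<le> 2*\<theta>" using th t by (simp add: mult_left_le_one_le)
      show "0 < 1 - \<theta>^2" using th th1 by (simp add: power2_eq_square mult_less_le_imp_less[of \<theta> 1 \<theta> 1, simplified] )
      have "(\<theta>*t)^2 \<le> \<theta>^2" using th t tt by (intro power_mono) (auto simp: mult_left_le_one_le)
      thus "1 - \<theta>^2 \<le> 1 - (\<theta>*t)^2" by simp
    qed
    finally have "Fv \<le> 2*\<theta>/(1-\<theta>^2)" .
    moreover have "t * Fv \<le> Fv" using t F0 by (simp add: mult_left_le_one_le)
    ultimately show ?thesis by linarith
  qed
  define a where "a = 2/25*(1-\<theta>)*(\<delta>*t*Fv)"
  define b where "b = \<theta>*\<delta>*(1-\<theta>^2)/2"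
  have a0: "a \<ge> 0" unfolding a_def using th1 d t F0 by simp
  have h1: "Fv + 2*a \<le> \<theta>*\<delta>" using mB unfolding a_def by (simp add: algebra_simps)
  have h2: "a \<le> b"
  proof -
    have q: "(1-\<theta>^2) > 0" using th th1 by (simp add: power2_eq_square mult_less_le_imp_less[of \<theta> 1 \<theta> 1, simplified])
    have "a = \<delta> * (2/25*(1-\<theta>)*(t*Fv))" unfolding a_def by simp
    also have "\<dots> \<le> \<delta> * (2/25*(1-\<theta>)*(2*\<theta>/(1-\<theta>^2)))"
      using FM th1 d by (intro mult_left_mono) auto
    also have "\<dots> \<le> b"
    proof -
      have s1: "\<theta>^2 \<le> (3/4)^2" using th by (intro power_mono) auto
      have s2: "1 - \<theta>^2 \<ge> 7/16" using s1 by (simp add: power2_eq_square)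
      have key: "(1+\<theta>)*(1-\<theta>^2) \<ge> 1*(7/16)"
        using th s2 by (intro mult_mono) auto
      have p1: "1+\<theta> > 0" "1-\<theta> > 0" using th th1 by auto
      have e: "\<delta> * (2/25*(1-\<theta>)*(2*\<theta>/(1-\<theta>^2))) = (\<delta>*\<theta>)*(4/(25*(1+\<theta>)))"
      proof -
        have r: "1-\<theta>^2 = (1-\<theta>)*(1+\<theta>)" by (simp add: power2_eq_square algebra_simps)
        have h: "(1-\<theta>)*(2*\<theta>/((1-\<theta>)*(1+\<theta>))) = 2*\<theta>/(1+\<theta>)" using p1 by simp
        have "\<delta> * (2/25*(1-\<theta>)*(2*\<theta>/((1-\<theta>)*(1+\<theta>))))
              = \<delta> * (2/25*((1-\<theta>)*(2*\<theta>/((1-\<theta>)*(1+\<theta>)))))" by (simp only: mult.assoc)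
        also have "\<dots> = \<delta> * (2/25*(2*\<theta>/(1+\<theta>)))" unfolding h ..
        also have "\<dots> = (\<delta>*\<theta>)*(4/(25*(1+\<theta>)))" using p1 by (simp add: field_simps)
        finally show ?thesis unfolding r .
      qed
      have f: "4/(25*(1+\<theta>)) \<le> (1-\<theta>^2)/2"
      proof -
        have "(1-\<theta>^2)*(25+25*\<theta>) = 25*((1+\<theta>)*(1-\<theta>^2))" by (simp add: algebra_simps)
        hence k2: "8 \<le> (1-\<theta>^2)*(25+25*\<theta>)" using key by linarith
        thus ?thesis using p1 by (simp add: divide_simps)
      qed
      have "(\<delta>*\<theta>)*(4/(25*(1+\<theta>))) \<le> (\<delta>*\<theta>)*((1-\<theta>^2)/2)"
        using f d th by (intro mult_left_mono) auto
      thus ?thesis using e unfolding b_def by (simp add: algebra_simps)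
    qed
    finally show ?thesis .
  qed
  have LHS: "fth \<theta> \<delta> * (1 + 4 * (1/50) * (1 - \<theta>) * C1 * \<delta> * tanh (\<delta>/2)) = Fv + C1*a"
    unfolding F Fv_def[symmetric] tanh a_def by (simp add: algebra_simps)
  have td: "\<theta>*\<delta> > 0" using th d by simp
  show ?thesis
  proof (cases "C1 \<le> 2")
    case True
    have "C1*a \<le> 2*a" using True a0 by (intro mult_right_mono) auto
    moreover have "1*(\<theta>*\<delta>) \<le> C2*(\<theta>*\<delta>)" using C td by (intro mult_right_mono) auto
    ultimately show ?thesis using LHS h1 by (simp add: mult.assoc)
  next
    case False
    have "(C1-2)*a \<le> (C1-2)*b" using False h2 by (intro mult_left_mono) auto
    moreover have "\<theta>*\<delta> + (C1-2)*b = (1 + (C1/2 - 1) * (1 - \<theta>^2))*(\<theta>*\<delta>)"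
      unfolding b_def by (simp add: field_simps)
    moreover have "(1 + (C1/2 - 1) * (1 - \<theta>^2))*(\<theta>*\<delta>) \<le> C2*(\<theta>*\<delta>)"
      using C td by (intro mult_right_mono) auto
    ultimately show ?thesis using LHS h1 by (simp add: mult.assoc algebra_simps)
  qed
qed

theorem mainTheorem11:
  shows "(\<forall>\<theta>::real. 0 < \<theta> \<and> \<theta> \<le> 3/4 \<longrightarrow>
            (\<forall>x y::real. \<bar>fth \<theta> x - fth \<theta> y\<bar> \<le> 2 * fth \<theta> (\<bar>x - y\<bar> / 2)))
       \<and> (\<exists>\<kappa>::real. \<kappa> > 1/100 \<and>
            (\<forall>\<theta>::real. 0 < \<theta> \<and> \<theta> \<le> 3/4 \<longrightarrow>
              (\<forall>C1 C2 \<delta>::real. C1 \<ge> 1 \<and> C2 \<ge> 1 \<and> C2 \<ge> 1 + (C1/2 - 1) * (1 - \<theta>^2) \<and> \<delta> > 0 \<longrightarrow>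
                 fth \<theta> \<delta> * (1 + 4 * \<kappa> * (1 - \<theta>) * C1 * \<delta> * tanh (\<delta>/2)) \<le> C2 * \<theta> * \<delta>)))"
proof (intro conjI allI impI)
  fix \<theta> x y :: real assume "0 < \<theta> \<and> \<theta> \<le> 3/4"
  thus "\<bar>fth \<theta> x - fth \<theta> y\<bar> \<le> 2 * fth \<theta> (\<bar>x - y\<bar> / 2)" using part1 by simp
next
  show "\<exists>\<kappa>::real. \<kappa> > 1/100 \<and>
            (\<forall>\<theta>::real. 0 < \<theta> \<and> \<theta> \<le> 3/4 \<longrightarrow>
              (\<forall>C1 C2 \<delta>::real. C1 \<ge> 1 \<and> C2 \<ge> 1 \<and> C2 \<ge> 1 + (C1/2 - 1) * (1 - \<theta>^2) \<and> \<delta> > 0 \<longrightarrow>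
                 fth \<theta> \<delta> * (1 + 4 * \<kappa> * (1 - \<theta>) * C1 * \<delta> * tanh (\<delta>/2)) \<le> C2 * \<theta> * \<delta>))"
    by (rule exI[of _ "1/50"]) (use part2 in auto)
qed

end
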